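(* Let $\mathcal H$ be a finite index set, let $n$ and $k$ be integers, and for each $j\in\mathcal H$ let $\mathcal X_j\subseteq\mathbb R^m$ be closed and convex, with $\bigcap_{j\in\mathcal H}\mathcal X_j=\{x^*\}$. Suppose $\mathcal H$ is $k$-redundant. Suppose $\mu>0$ is such that for every $x\in\mathbb R^m$ and every $\mathcal S\subseteq\mathcal H$ with $|\mathcal S|\ge n-k$, $$\max_{i\in\mathcal S}\mathrm{dist}(x,\mathcal X_i)\ge\mu\,\mathrm{dist}\Big(x,\bigcap_{i\in\mathcal S}\mathcal X_i\Big).$$ Let $x_j\in\mathcal X_j$ be arbitrary for each $j\in\mathcal H$, and let $\mathcal S\subseteq\mathcal H$ with $|\mathcal S|\ge n-k$. Then $0<\mu\le 1$, and for every $i\in\mathcal H$, $$\max_{j\in\mathcal S}\|x_i-x_j\|^2\ge\mu^2\|x_i-x^*\|^2.$$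
   Context: $\mathrm{dist}(x,\mathcal C)=\|x-\mathrm P_{\mathcal C}[x]\|$, where $\mathrm P_{\mathcal C}$ is the Euclidean projection onto a closed convex set $\mathcal C$. $\mathcal H$ is $k$-redundant if for every $\mathcal S\subseteq\mathcal H$ with $|\mathcal S|\ge n-k$ we have $\bigcap_{i\in\mathcal S}\mathcal X_i=\bigcap_{i\in\mathcal H}\mathcal X_i$. (In the paper, $n$ is the total number of agents and $\mathcal H$ is the set of normal agents.) *)

theory Defs
  imports "HOL-Analysis.Analysis"
begin

text \<open>k-redundancy of the index set H of normal agents, n the total number of agents.\<close>
definition k_redundant :: "nat \<Rightarrow> nat \<Rightarrow> 'a set \<Rightarrow> ('a \<Rightarrow> 'b set) \<Rightarrow> bool" where
  "k_redundant n k H X \<longleftrightarrow>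
     (\<forall>S. S \<subseteq> H \<and> int (card S) \<ge> int n - int k \<longrightarrow> (\<Inter>i\<in>S. X i) = (\<Inter>i\<in>H. X i))"

end

theory Submission
  imports Defs
begin

lemma helperA: fixes X :: "'a \<Rightarrow> (real ^ 'm) set" and x :: "real^'m"
  assumes mu_bound: "\<forall>x :: real ^ 'm. \<forall>T. T \<subseteq> H \<and> int (card T) \<ge> int n - int k \<longrightarrow>
         Max ((\<lambda>i. infdist x (X i)) ` T) \<ge> \<mu> * infdist x (\<Inter>i\<in>T. X i)"
  and S_sub: "S \<subseteq> H"  and S_card: "int (card S) \<ge> int n - int k"
  shows "Max ((\<lambda>i. infdist x (X i)) ` S) \<ge> \<mu> * infdist x (\<Inter>i\<in>S. X i)"
  using mu_bound S_sub S_card by blast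
lemma helperB: fixes X :: "'a \<Rightarrow> (real ^ 'm) set" and x :: "real^'m"
  assumes SI: "(\<Inter>i\<in>S. X i) = {xstar}" and h: "Max ((\<lambda>i. infdist x (X i)) ` S) \<ge> \<mu> * infdist x (\<Inter>i\<in>S. X i)"
  shows "Max ((\<lambda>i. infdist x (X i)) ` S) \<ge> \<mu> * infdist x {xstar}"
  using h unfolding SI .

theorem lemma1:
  fixes H :: "'a set" and n k :: nat and X :: "'a \<Rightarrow> (real ^ 'm) set"
    and xstar :: "real ^ 'm" and \<mu> :: real and xs :: "'a \<Rightarrow> real ^ 'm" and S :: "'a set"
  assumes finH: "finite H"
    and closedX: "\<forall>j\<in>H. closed (X j)"
    and convexX: "\<forall>j\<in>H. convex (X j)"
    and inter: "(\<Inter>j\<in>H. X j) = {xstar}"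
    and red: "k_redundant n k H X"
    and mu_pos: "\<mu> > 0"
    and mu_bound: "\<forall>x :: real ^ 'm. \<forall>T. T \<subseteq> H \<and> int (card T) \<ge> int n - int k \<longrightarrow>
         Max ((\<lambda>i. infdist x (X i)) ` T) \<ge> \<mu> * infdist x (\<Inter>i\<in>T. X i)"
    and xs_in: "\<forall>j\<in>H. xs j \<in> X j"
    and S_sub: "S \<subseteq> H"
    and S_card: "int (card S) \<ge> int n - int k"
  shows "0 < \<mu> \<and> \<mu> \<le> 1 \<and>
    (\<forall>i\<in>H. Max ((\<lambda>j. (norm (xs i - xs j))\<^sup>2) ` S) \<ge> \<mu>\<^sup>2 * (norm (xs i - xstar))\<^sup>2)"
proof -
  have finS: "finite S" using finH S_sub finite_subset by blast
  have SI: "(\<Inter>i\<in>S. X i) = {xstar}"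
    using red S_sub S_card inter unfolding k_redundant_def by auto
  define e :: "real ^ 'm" where "e = (\<chi> i. 1)"
  have e0: "e \<noteq> 0" unfolding e_def by (simp add: vec_eq_iff)
  have Sne: "S \<noteq> {}"
  proof
    assume "S = {}"
    then have U: "(UNIV :: (real ^ 'm) set) = {xstar}" using SI by simp
    have "xstar + e \<in> {xstar}" by (subst U[symmetric]) (rule UNIV_I)
    then show False using e0 by simp
  qed
  have xstarX: "xstar \<in> X j" if "j \<in> S" for j using SI that by auto
  have ex: "\<exists>j0\<in>S. \<mu> * dist x xstar \<le> infdist x (X j0)" for x
  proof -
    have "Max ((\<lambda>i. infdist x (X i)) ` S) \<ge> \<mu> * infdist x (\<Inter>i\<in>S. X i)"
      by (rule helperA[OF mu_bound S_sub S_card])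
    then have "Max ((\<lambda>i. infdist x (X i)) ` S) \<ge> \<mu> * infdist x {xstar}"
      by (rule helperB[OF SI])
    moreover have "Max ((\<lambda>i. infdist x (X i)) ` S) \<in> (\<lambda>i. infdist x (X i)) ` S"
      using finS Sne by (intro Max_in) auto
    ultimately show ?thesis by (auto simp: infdist_singleton)
  qed
  have mu1: "\<mu> \<le> 1"
  proof -
    obtain j0 where j0: "j0 \<in> S" "\<mu> * dist (xstar + e) xstar \<le> infdist (xstar + e) (X j0)"
      using ex by blast
    have "infdist (xstar + e) (X j0) \<le> dist (xstar + e) xstar"
      using xstarX[OF j0(1)] by (rule infdist_le)
    with j0(2) have "\<mu> * dist (xstar + e) xstar \<le> 1 * dist (xstar + e) xstar" by simp
    moreover have "dist (xstar + e) xstar > 0" using e0 by (simp add: dist_norm)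
    ultimately show ?thesis by (rule mult_right_le_imp_le)
  qed
  have main: "Max ((\<lambda>j. (norm (xs i - xs j))\<^sup>2) ` S) \<ge> \<mu>\<^sup>2 * (norm (xs i - xstar))\<^sup>2"
    if iH: "i \<in> H" for i
  proof -
    obtain j0 where j0: "j0 \<in> S" "\<mu> * dist (xs i) xstar \<le> infdist (xs i) (X j0)"
      using ex by blast
    have "infdist (xs i) (X j0) \<le> dist (xs i) (xs j0)"
      using xs_in S_sub j0(1) by (intro infdist_le) auto
    with j0 have a: "\<mu> * norm (xs i - xstar) \<le> norm (xs i - xs j0)" by (simp add: dist_norm)
    have "(\<mu> * norm (xs i - xstar))\<^sup>2 \<le> (norm (xs i - xs j0))\<^sup>2"
      using a mu_pos by (intro power_mono) auto
    also have "\<dots> \<le> Max ((\<lambda>j. (norm (xs i - xs j))\<^sup>2) ` S)"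
      using finS j0(1) by (intro Max_ge) auto
    finally show ?thesis by (simp add: power_mult_distrib)
  qed
  show ?thesis using mu_pos mu1 main by blast
qed

end
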